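(* Consider a Kijima type II repair model with deterministic degrees of repair $A_1=1$, $A_2=0$ (and arbitrary nonnegative $A_k$, $k\ge3$): virtual ages $V_0=0$, $V_k=A_k(V_{k-1}+X_k)$, where $X_1$ is uniformly distributed on $(0,1)$ (survival function $\overline G$) and, for each $k\ge1$, the conditional survival function of $X_{k+1}$ given $(X_1,\dots,X_k)$ is $z\mapsto\overline G(z\mid V_k)$. Let $N(t)=\max\{k:X_1+\dots+X_k\le t\}$ and let $T$ be exponential with mean $1$, independent of $(X_k)$. Then $X_1$ is IFR, $T$ is DFR, but $N(T)$ is not discrete DFR; specifically $$P(N(T)\ge 2)^2> P(N(T)\ge1)\,P(N(T)\ge3).$$
   Context: For $v\ge0$, $\overline G(z\mid v)=\overline G(v+z)/\overline G(v)$ if $\overline G(v)>0$ and $0$ otherwise. A survival function is IFR (resp. DFR) if $t\mapsto\overline G(z+t)/\overline G(t)$ is decreasing (resp. increasing) for every $z\ge0$. A $\{0,1,2,\dots\}$-valued $N$ is discrete DFR if $P(N\ge n+1)^2\le P(N\ge n)P(N\ge n+2)$ for all $n\ge0$. *)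

theory Defs
  imports "HOL-Probability.Probability"
begin

definition surv :: "'a measure \<Rightarrow> ('a \<Rightarrow> real) \<Rightarrow> real \<Rightarrow> real" where
  "surv M Y z = measure M {\<omega> \<in> space M. z < Y \<omega>}"

definition cond_surv :: "(real \<Rightarrow> real) \<Rightarrow> real \<Rightarrow> real \<Rightarrow> real" where
  "cond_surv Gb v z = (if Gb v > 0 then Gb (v + z) / Gb v else 0)"

definition IFR :: "(real \<Rightarrow> real) \<Rightarrow> bool" where
  "IFR Gb \<longleftrightarrow> (\<forall>z\<ge>0. \<forall>s t. 0 \<le> s \<longrightarrow> s \<le> t \<longrightarrow> cond_surv Gb t z \<le> cond_surv Gb s z)"

definition DFR :: "(real \<Rightarrow> real) \<Rightarrow> bool" where
  "DFR Gb \<longleftrightarrow> (\<forall>z\<ge>0. \<forall>s t. 0 \<le> s \<longrightarrow> s \<le> t \<longrightarrow> cond_surv Gb s z \<le> cond_surv Gb t z)"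

definition discrete_DFR :: "'a measure \<Rightarrow> ('a \<Rightarrow> enat) \<Rightarrow> bool" where
  "discrete_DFR M Nv \<longleftrightarrow> (\<forall>n::nat.
     (measure M {\<omega> \<in> space M. enat (n+1) \<le> Nv \<omega>})\<^sup>2 \<le>
       measure M {\<omega> \<in> space M. enat n \<le> Nv \<omega>} * measure M {\<omega> \<in> space M. enat (n+2) \<le> Nv \<omega>})"

fun virt_age :: "(nat \<Rightarrow> real) \<Rightarrow> (nat \<Rightarrow> 'a \<Rightarrow> real) \<Rightarrow> nat \<Rightarrow> 'a \<Rightarrow> real" where
  "virt_age A X 0 \<omega> = 0"
| "virt_age A X (Suc k) \<omega> = A (Suc k) * (virt_age A X k \<omega> + X (Suc k) \<omega>)"

definition count_proc :: "(nat \<Rightarrow> 'a \<Rightarrow> real) \<Rightarrow> real \<Rightarrow> 'a \<Rightarrow> enat" where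
  "count_proc X t \<omega> = Sup {enat k | k. (\<Sum>i\<in>{1..k}. X i \<omega>) \<le> t}"

end

theory Submission
  imports Defs
begin

definition gU :: "real \<Rightarrow> real" where "gU x = min 1 (max 0 (1 - x))"

lemma count_iff:
  assumes nn: "\<And>i. 0 \<le> X i \<omega>" and n: "1 \<le> n"
  shows "enat n \<le> count_proc X t \<omega> \<longleftrightarrow> (\<Sum>i\<in>{1..n}. X i \<omega>) \<le> t"
proof
  assume "(\<Sum>i\<in>{1..n}. X i \<omega>) \<le> t"
  then show "enat n \<le> count_proc X t \<omega>" unfolding count_proc_def
    by (auto intro: Sup_upper)
next
  assume "enat n \<le> count_proc X t \<omega>"
  then have "enat (n - 1) < count_proc X t \<omega>" using n
    by (metis Suc_diff_le diff_Suc_1 enat_ord_simps(2) le_less_trans lessI order_le_less)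
  then obtain k where k: "enat (n-1) < enat k" "(\<Sum>i\<in>{1..k}. X i \<omega>) \<le> t"
    unfolding count_proc_def less_Sup_iff by auto
  have "(\<Sum>i\<in>{1..n}. X i \<omega>) \<le> (\<Sum>i\<in>{1..k}. X i \<omega>)"
    using k(1) n nn by (intro sum_mono2) auto
  with k show "(\<Sum>i\<in>{1..n}. X i \<omega>) \<le> t" by linarith
qed

lemma IFR_gU: "IFR gU"
  unfolding IFR_def
proof (intro allI impI)
  fix z s t :: real assume z: "0 \<le> z" and s: "0 \<le> s" and st: "s \<le> t"
  show "cond_surv gU t z \<le> cond_surv gU s z"
  proof (cases "t < 1")
    case False
    then have "gU t = 0" by (simp add: gU_def)
    moreover have "0 \<le> cond_surv gU s z" by (simp add: cond_surv_def gU_def)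
    ultimately show ?thesis by (simp add: cond_surv_def)
  next
    case True
    then have gt: "gU t = 1 - t" "gU s = 1 - s" using s st by (auto simp: gU_def)
    have gtz: "gU (t+z) = max 0 (1 - t - z)" "gU (s+z) = max 0 (1 - s - z)"
      using s st z by (auto simp: gU_def)
    show ?thesis
    proof (cases "1 - t - z \<le> 0")
      case True
      then show ?thesis using gt gtz \<open>t<1\<close> st s z by (simp add: cond_surv_def)
    next
      case False
      have "(1 - t - z) / (1 - t) = 1 - z / (1 - t)" using \<open>t<1\<close> by (simp add: field_simps)
      also have "\<dots> \<le> 1 - z / (1 - s)" using \<open>t<1\<close> st z
        by (intro diff_left_mono divide_left_mono) auto
      also have "\<dots> = (1 - s - z) / (1 - s)" using \<open>t<1\<close> st by (simp add: field_simps)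
      finally show ?thesis using gt gtz \<open>t<1\<close> st s z False by (simp add: cond_surv_def)
    qed
  qed
qed

lemma ennreal_div1[simp]: "(x::ennreal) / 1 = x"
  by (simp add: divide_ennreal_def)

lemma gU_range: "0 \<le> gU x" "gU x \<le> 1" by (auto simp: gU_def)

lemma (in prob_space) emeasure_unif_gt:
  assumes [measurable]: "Y \<in> borel_measurable M" and U: "distr M lborel Y = uniform_measure lborel {0<..<1}"
  shows "emeasure M {\<omega>\<in>space M. z < Y \<omega>} = ennreal (gU z)"
proof -
  have "emeasure M {\<omega>\<in>space M. z < Y \<omega>} = emeasure (distr M lborel Y) {z<..}"
    by (subst emeasure_distr) (auto intro!: arg_cong2[where f=emeasure])
  also have "\<dots> = emeasure lborel ({0<..<1} \<inter> {z<..}) / emeasure lborel {0<..<(1::real)}"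
    unfolding U by (rule emeasure_uniform_measure) auto
  also have "\<dots> = ennreal (gU z)"
  proof (cases "z < 1")
    case True
    then have "{0<..<1} \<inter> {z<..} = {max 0 z<..<(1::real)}" by auto
    then have "emeasure lborel ({0<..<1} \<inter> {z<..}) = ennreal (1 - max 0 z)" using True by simp
    moreover have "gU z = 1 - max 0 z" using True by (simp add: gU_def)
    ultimately show ?thesis by simp
  next
    case False
    then have "{0<..<1} \<inter> {z<..} = ({}::real set)" by auto
    moreover have "gU z = 0" using False by (simp add: gU_def)
    ultimately show ?thesis by simp
  qed
  finally show ?thesis .
qed
lemma (in prob_space) surv_unif:
  assumes [measurable]: "Y \<in> borel_measurable M" and U: "distr M lborel Y = uniform_measure lborel {0<..<1}"
  shows "surv M Y = gU"
proof
  fix z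
  show "surv M Y z = gU z" unfolding surv_def
    using emeasure_unif_gt[OF assms, of z] gU_range[of z]
    by (simp add: emeasure_eq_measure)
qed

lemma (in prob_space) emeasure_unif_le:
  assumes [measurable]: "Y \<in> borel_measurable M" and U: "distr M lborel Y = uniform_measure lborel {0<..<1}"
  shows "emeasure M {\<omega>\<in>space M. Y \<omega> \<le> z} = ennreal (1 - gU z)"
proof -
  have "prob {\<omega>\<in>space M. Y \<omega> \<le> z} = prob (space M - {\<omega>\<in>space M. z < Y \<omega>})"
    by (auto intro!: arg_cong[where f=prob])
  also have "\<dots> = 1 - gU z" using emeasure_unif_gt[OF assms, of z] gU_range[of z]
    by (subst prob_compl) (auto simp: emeasure_eq_measure)
  finally show ?thesis by (simp add: emeasure_eq_measure)
qed

lemma (in prob_space) nn_integral_unif: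
  fixes Y :: "'a \<Rightarrow> real"
  assumes [measurable]: "Y \<in> borel_measurable M" and U: "distr M lborel Y = uniform_measure lborel {0<..<1}"
    and f[measurable]: "f \<in> borel_measurable borel"
  shows "(\<integral>\<^sup>+\<omega>. f (Y \<omega>) \<partial>M) = (\<integral>\<^sup>+x. f x * indicator {0..1} x \<partial>lborel)"
proof -
  have "(\<integral>\<^sup>+\<omega>. f (Y \<omega>) \<partial>M) = (\<integral>\<^sup>+x. f x \<partial>distr M lborel Y)"
    by (subst nn_integral_distr) auto
  also have "\<dots> = (\<integral>\<^sup>+x. f x * indicator {0<..<1} x \<partial>lborel) / emeasure lborel {0<..<1::real}"
    unfolding U by (rule nn_integral_uniform_measure) auto
  also have "\<dots> = (\<integral>\<^sup>+x. f x * indicator {0<..<1} x \<partial>lborel)"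
    by simp
  also have "\<dots> = (\<integral>\<^sup>+x. f x * indicator {0..1} x \<partial>lborel)"
    apply (intro nn_integral_cong_AE)
    using AE_lborel_singleton[of 0] AE_lborel_singleton[of 1]
    by eventually_elim (auto simp: indicator_def)
  finally show ?thesis .
qed

lemma (in prob_space) unif_exp:
  assumes [measurable]: "Y \<in> borel_measurable M" and U: "distr M lborel Y = uniform_measure lborel {0<..<1}"
  shows "(\<integral>\<^sup>+\<omega>. ennreal (exp (- Y \<omega>)) \<partial>M) = ennreal (1 - exp (-1))"
proof -
  have "(\<integral>\<^sup>+\<omega>. ennreal (exp (- Y \<omega>)) \<partial>M) = (\<integral>\<^sup>+x. ennreal (exp (-x)) * indicator {0..1} x \<partial>lborel)"
    by (rule nn_integral_unif[OF assms]) auto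
  also have "\<dots> = ennreal ((- exp (-1)) - (- exp (-0)))"
    by (rule nn_integral_FTC_Icc) (auto intro!: derivative_eq_intros)
  finally show ?thesis by simp
qed

lemma (in prob_space) unif_mean:
  assumes [measurable]: "Y \<in> borel_measurable M" and U: "distr M lborel Y = uniform_measure lborel {0<..<1}"
  shows "(\<integral>\<^sup>+\<omega>. ennreal (Y \<omega>) \<partial>M) = ennreal (1/2)"
proof -
  have "(\<integral>\<^sup>+\<omega>. ennreal (Y \<omega>) \<partial>M) = (\<integral>\<^sup>+x. ennreal x * indicator {0..1} x \<partial>lborel)"
    by (rule nn_integral_unif[OF assms]) auto
  also have "\<dots> = ennreal ((1^2/2) - (0^2/2))"
    by (rule nn_integral_FTC_Icc[where F="\<lambda>x. x^2/2"]) (auto intro!: derivative_eq_intros)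
  finally show ?thesis by simp
qed

lemma (in prob_space) exp_ge:
  fixes T :: "'a \<Rightarrow> real"
  assumes D: "distributed M lborel T (exponential_density 1)" and a: "0 \<le> a"
  shows "emeasure M {\<omega>\<in>space M. a \<le> T \<omega>} = ennreal (exp (-a))"
proof -
  have [measurable]: "T \<in> borel_measurable M" using distributed_measurable[OF D] by simp
  have "emeasure M {\<omega>\<in>space M. a \<le> T \<omega>} = emeasure (distr M lborel T) {a..}"
    by (subst emeasure_distr) (auto intro!: arg_cong2[where f=emeasure])
  also have "\<dots> = emeasure (density lborel (exponential_density 1)) {a..}"
    unfolding distributed_distr_eq_density[OF D] ..
  also have "\<dots> = (\<integral>\<^sup>+x. ennreal (exponential_density 1 x) * indicator {a..} x \<partial>lborel)"
    by (subst emeasure_density) auto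
  also have "\<dots> = (\<integral>\<^sup>+x. ennreal (exp (-x)) * indicator {a..} x \<partial>lborel)"
    using a by (intro nn_integral_cong) (auto simp: exponential_density_def indicator_def)
  also have "\<dots> = ennreal (0 - (- exp (-a)))"
  proof (rule nn_integral_FTC_atLeast)
    have "((\<lambda>x::real. exp (-x)) \<longlongrightarrow> 0) at_top"
      by (rule filterlim_compose[OF exp_at_bot filterlim_uminus_at_bot_at_top])
    then show "((\<lambda>x::real. - exp (-x)) \<longlongrightarrow> 0) at_top"
      using tendsto_minus by fastforce
  qed (auto intro!: derivative_eq_intros)
  finally show ?thesis by simp
qed

lemma (in prob_space) indepT:
  fixes T :: "'a \<Rightarrow> real" and X :: "nat \<Rightarrow> 'a \<Rightarrow> real"
  assumes Xmeas[measurable]: "\<And>k. X k \<in> borel_measurable M"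
    and Texp: "distributed M lborel T (exponential_density 1)"
    and Tindep: "\<forall>B \<in> sets borel. \<forall>C \<in> sets (PiM UNIV (\<lambda>_::nat. borel)).
        measure M ({\<omega> \<in> space M. T \<omega> \<in> B} \<inter> {\<omega> \<in> space M. (\<lambda>k. X k \<omega>) \<in> C})
        = measure M {\<omega> \<in> space M. T \<omega> \<in> B} * measure M {\<omega> \<in> space M. (\<lambda>k. X k \<omega>) \<in> C}"
    and f[measurable]: "f \<in> borel_measurable (PiM UNIV (\<lambda>_::nat. borel))"
    and fnn: "\<And>\<omega>. \<omega> \<in> space M \<Longrightarrow> 0 \<le> f (\<lambda>k. X k \<omega>)"
  shows "emeasure M {\<omega>\<in>space M. f (\<lambda>k. X k \<omega>) \<le> T \<omega>} = (\<integral>\<^sup>+\<omega>. ennreal (exp (- f (\<lambda>k. X k \<omega>))) \<partial>M)"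
proof -
  define PM where "PM = PiM UNIV (\<lambda>_::nat. borel :: real measure)"
  define Z where "Z = (\<lambda>\<omega> k. X k \<omega>)"
  have [measurable]: "T \<in> borel_measurable M" using distributed_measurable[OF Texp] by simp
  have Zm[measurable]: "Z \<in> measurable M PM" unfolding Z_def PM_def
    by (rule measurable_PiM_single') auto
  have fm[measurable]: "f \<in> borel_measurable PM" unfolding PM_def by simp
  define DZ where "DZ = distr M PM Z"
  define DT where "DT = distr M borel T"
  interpret DZ: prob_space DZ unfolding DZ_def by (rule prob_space_distr) simp
  interpret DT: prob_space DT unfolding DT_def by (rule prob_space_distr) simp
  have eq: "DZ \<Otimes>\<^sub>M DT = distr M (PM \<Otimes>\<^sub>M borel) (\<lambda>\<omega>. (Z \<omega>, T \<omega>))"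
  proof (rule pair_measure_eqI)
    show "sigma_finite_measure DZ" "sigma_finite_measure DT"
      by (simp_all add: DZ.sigma_finite_measure_axioms DT.sigma_finite_measure_axioms)
    show "sets (DZ \<Otimes>\<^sub>M DT) = sets (distr M (PM \<Otimes>\<^sub>M borel) (\<lambda>\<omega>. (Z \<omega>, T \<omega>)))"
      unfolding DZ_def DT_def sets_distr[of M "PM \<Otimes>\<^sub>M borel"]
      by (intro sets_pair_measure_cong sets_distr)
    fix A B assume A: "A \<in> sets DZ" and B: "B \<in> sets DT"
    then have [measurable]: "A \<in> sets PM" "B \<in> sets borel" unfolding DZ_def DT_def by auto
    have "emeasure DZ A * emeasure DT B = ennreal (measure M {\<omega>\<in>space M. Z \<omega> \<in> A} * measure M {\<omega>\<in>space M. T \<omega> \<in> B})"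
    proof -
      have "Z -` A \<inter> space M = {\<omega>\<in>space M. Z \<omega> \<in> A}" by auto
      then have e1: "emeasure DZ A = ennreal (measure M {\<omega>\<in>space M. Z \<omega> \<in> A})"
        unfolding DZ_def using emeasure_distr[OF Zm \<open>A \<in> sets PM\<close>] by (simp add: emeasure_eq_measure)
      have "T -` B \<inter> space M = {\<omega>\<in>space M. T \<omega> \<in> B}" by auto
      then have e2: "emeasure DT B = ennreal (measure M {\<omega>\<in>space M. T \<omega> \<in> B})"
        unfolding DT_def using emeasure_distr[of T M borel B] \<open>B \<in> sets borel\<close> by (simp add: emeasure_eq_measure)
      show ?thesis unfolding e1 e2 by (simp add: ennreal_mult)
    qed
    also have "\<dots> = ennreal (measure M ({\<omega> \<in> space M. T \<omega> \<in> B} \<inter> {\<omega> \<in> space M. Z \<omega> \<in> A}))"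
      using Tindep \<open>A \<in> sets PM\<close> \<open>B \<in> sets borel\<close> unfolding Z_def PM_def by (simp add: mult.commute)
    also have "\<dots> = emeasure (distr M (PM \<Otimes>\<^sub>M borel) (\<lambda>\<omega>. (Z \<omega>, T \<omega>))) (A \<times> B)"
    proof -
      have pm: "(\<lambda>\<omega>. (Z \<omega>, T \<omega>)) \<in> measurable M (PM \<Otimes>\<^sub>M borel)" by measurable
      have ab: "A \<times> B \<in> sets (PM \<Otimes>\<^sub>M borel)" by (rule pair_measureI) simp_all
      have "(\<lambda>\<omega>. (Z \<omega>, T \<omega>)) -` (A \<times> B) \<inter> space M = {\<omega> \<in> space M. T \<omega> \<in> B} \<inter> {\<omega> \<in> space M. Z \<omega> \<in> A}"
        by auto
      then show ?thesis using emeasure_distr[OF pm ab] by (simp add: emeasure_eq_measure)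
    qed
    finally show "emeasure DZ A * emeasure DT B = emeasure (distr M (PM \<Otimes>\<^sub>M borel) (\<lambda>\<omega>. (Z \<omega>, T \<omega>))) (A \<times> B)" .
  qed
  define Q where "Q = {p \<in> space (PM \<Otimes>\<^sub>M borel). f (fst p) \<le> snd p}"
  have Q[measurable]: "Q \<in> sets (PM \<Otimes>\<^sub>M borel)" unfolding Q_def by measurable
  have sDD: "sets (DZ \<Otimes>\<^sub>M DT) = sets (PM \<Otimes>\<^sub>M borel)"
    unfolding DZ_def DT_def by (intro sets_pair_measure_cong sets_distr)
  have sPD: "sets (PM \<Otimes>\<^sub>M DT) = sets (PM \<Otimes>\<^sub>M borel)"
    unfolding DT_def by (intro sets_pair_measure_cong sets_distr refl)
  have mE: "(\<lambda>x. emeasure DT (Pair x -` Q)) \<in> borel_measurable PM"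
    using Q sPD by (intro DT.measurable_emeasure_Pair) simp
  have "emeasure M {\<omega>\<in>space M. f (\<lambda>k. X k \<omega>) \<le> T \<omega>} = emeasure (distr M (PM \<Otimes>\<^sub>M borel) (\<lambda>\<omega>. (Z \<omega>, T \<omega>))) Q"
  proof -
    have pm: "(\<lambda>\<omega>. (Z \<omega>, T \<omega>)) \<in> measurable M (PM \<Otimes>\<^sub>M borel)" by measurable
    have "(\<lambda>\<omega>. (Z \<omega>, T \<omega>)) -` Q \<inter> space M = {\<omega>\<in>space M. f (\<lambda>k. X k \<omega>) \<le> T \<omega>}"
      using measurable_space[OF Zm] by (auto simp: Q_def space_pair_measure Z_def)
    then show ?thesis using emeasure_distr[OF pm Q] by simp
  qed
  also have "\<dots> = emeasure (DZ \<Otimes>\<^sub>M DT) Q" by (simp only: eq)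
  also have "\<dots> = (\<integral>\<^sup>+x. emeasure DT (Pair x -` Q) \<partial>DZ)"
    using Q sDD by (intro DT.emeasure_pair_measure_alt) simp
  also have "\<dots> = (\<integral>\<^sup>+\<omega>. emeasure DT (Pair (Z \<omega>) -` Q) \<partial>M)"
    unfolding DZ_def using mE by (subst nn_integral_distr) auto
  also have "\<dots> = (\<integral>\<^sup>+\<omega>. ennreal (exp (- f (\<lambda>k. X k \<omega>))) \<partial>M)"
  proof (intro nn_integral_cong)
    fix \<omega> assume \<omega>: "\<omega> \<in> space M"
    have "Pair (Z \<omega>) -` Q = {f (Z \<omega>)..}"
      using measurable_space[OF Zm \<omega>] by (auto simp: Q_def space_pair_measure)
    then have "emeasure DT (Pair (Z \<omega>) -` Q) = emeasure M {\<omega>'\<in>space M. f (Z \<omega>) \<le> T \<omega>'}"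
    proof -
      have "T -` {f (Z \<omega>)..} \<inter> space M = {\<omega>'\<in>space M. f (Z \<omega>) \<le> T \<omega>'}" by auto
      moreover have "{f (Z \<omega>)..} \<in> sets borel" by simp
      ultimately show ?thesis using \<open>Pair (Z \<omega>) -` Q = {f (Z \<omega>)..}\<close> unfolding DT_def
        by (simp add: emeasure_distr)
    qed
    also have "\<dots> = ennreal (exp (- f (Z \<omega>)))"
      using fnn[OF \<omega>] by (intro exp_ge[OF Texp]) (simp add: Z_def)
    finally show "emeasure DT (Pair (Z \<omega>) -` Q) = ennreal (exp (- f (\<lambda>k. X k \<omega>)))" by (simp add: Z_def)
  qed
  finally show ?thesis .
qed

lemma expint: "(\<integral>\<^sup>+z. ennreal (exp (-z)) * indicator {a..} z \<partial>lborel) = ennreal (exp (-a))"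
proof -
  have "(\<integral>\<^sup>+z. ennreal (exp (-z)) * indicator {a..} z \<partial>lborel) = ennreal (0 - (- exp (-a)))"
  proof (rule nn_integral_FTC_atLeast)
    have "((\<lambda>x::real. exp (-x)) \<longlongrightarrow> 0) at_top"
      by (rule filterlim_compose[OF exp_at_bot filterlim_uminus_at_bot_at_top])
    then show "((\<lambda>x::real. - exp (-x)) \<longlongrightarrow> 0) at_top"
      using tendsto_minus by fastforce
  qed (auto intro!: derivative_eq_intros)
  then show ?thesis by simp
qed

lemma (in prob_space) tonelli_exp:
  fixes W :: "'a \<Rightarrow> real"
  assumes [measurable]: "W \<in> borel_measurable M" "h \<in> borel_measurable M"
  shows "(\<integral>\<^sup>+\<omega>. h \<omega> * ennreal (exp (- W \<omega>)) \<partial>M) =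
    (\<integral>\<^sup>+z. ennreal (exp (-z)) * (\<integral>\<^sup>+\<omega>. h \<omega> * indicator {\<omega>\<in>space M. W \<omega> \<le> z} \<omega> \<partial>M) \<partial>lborel)"
proof -
  interpret P: pair_sigma_finite M lborel
    by (simp add: pair_sigma_finite_def sigma_finite_measure_axioms lborel.sigma_finite_measure_axioms)
  have "(\<integral>\<^sup>+\<omega>. h \<omega> * ennreal (exp (- W \<omega>)) \<partial>M) =
      (\<integral>\<^sup>+\<omega>. (\<integral>\<^sup>+z. h \<omega> * ennreal (exp (-z)) * (if W \<omega> \<le> z then 1 else 0) \<partial>lborel) \<partial>M)"
  proof (intro nn_integral_cong)
    fix \<omega>
    have "(\<integral>\<^sup>+z. h \<omega> * ennreal (exp (-z)) * (if W \<omega> \<le> z then 1 else 0) \<partial>lborel)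
        = h \<omega> * (\<integral>\<^sup>+z. ennreal (exp (-z)) * indicator {W \<omega>..} z \<partial>lborel)"
      by (subst nn_integral_cmult[symmetric]) (auto intro!: nn_integral_cong simp: indicator_def mult.assoc)
    then show "h \<omega> * ennreal (exp (- W \<omega>)) = (\<integral>\<^sup>+z. h \<omega> * ennreal (exp (-z)) * (if W \<omega> \<le> z then 1 else 0) \<partial>lborel)"
      by (simp add: expint)
  qed
  also have "\<dots> = (\<integral>\<^sup>+z. (\<integral>\<^sup>+\<omega>. h \<omega> * ennreal (exp (-z)) * (if W \<omega> \<le> z then 1 else 0) \<partial>M) \<partial>lborel)"
    by (rule P.Fubini'[symmetric]) measurable
  also have "\<dots> = (\<integral>\<^sup>+z. ennreal (exp (-z)) * (\<integral>\<^sup>+\<omega>. h \<omega> * indicator {\<omega>\<in>space M. W \<omega> \<le> z} \<omega> \<partial>M) \<partial>lborel)"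
  proof (intro nn_integral_cong)
    fix z :: real
    show "(\<integral>\<^sup>+\<omega>. h \<omega> * ennreal (exp (-z)) * (if W \<omega> \<le> z then 1 else 0) \<partial>M) =
        ennreal (exp (-z)) * (\<integral>\<^sup>+\<omega>. h \<omega> * indicator {\<omega>\<in>space M. W \<omega> \<le> z} \<omega> \<partial>M)"
      by (subst nn_integral_cmult[symmetric]) (auto intro!: nn_integral_cong simp: indicator_def mult_ac)
  qed
  finally show ?thesis .
qed

lemma gU_meas[measurable]: "gU \<in> borel_measurable borel"
  unfolding gU_def by measurable

locale kij = prob_space M for M :: "'a measure" +
  fixes X :: "nat \<Rightarrow> 'a \<Rightarrow> real" and A :: "nat \<Rightarrow> real"
  assumes A1: "A 1 = 1" and A2: "A 2 = 0"
    and Xmeas[measurable]: "\<And>k. X k \<in> borel_measurable M"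
    and Xnonneg: "\<And>k \<omega>. 0 \<le> X k \<omega>"
    and X1unif: "distr M lborel (X 1) = uniform_measure lborel {0<..<1}"
    and Xcond: "\<forall>k\<ge>1. \<forall>z\<ge>0. \<forall>B \<in> sets (PiM {1..k} (\<lambda>_. borel)).
        measure M ({\<omega> \<in> space M. z < X (Suc k) \<omega>} \<inter>
                   {\<omega> \<in> space M. (\<lambda>i\<in>{1..k}. X i \<omega>) \<in> B})
        = integral\<^sup>L M (\<lambda>\<omega>. indicator {\<omega> \<in> space M. (\<lambda>i\<in>{1..k}. X i \<omega>) \<in> B} \<omega>
                            * cond_surv (surv M (X 1)) (virt_age A X k \<omega>) z)"
begin

lemma survX1: "surv M (X 1) = gU"
  by (rule surv_unif[OF Xmeas X1unif])

lemma va1: "virt_age A X 1 \<omega> = X 1 \<omega>"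
  using A1 by (simp add: One_nat_def)

lemma va2: "virt_age A X 2 \<omega> = 0"
  using A2 by (simp add: numeral_2_eq_2)

lemma Xcond1: assumes z: "z \<ge> 0"
  shows "measure M {\<omega> \<in> space M. z < X 2 \<omega>} = (\<integral>\<omega>. cond_surv gU (X 1 \<omega>) z \<partial>M)"
proof -
  define B where "B = space (PiM {1..1::nat} (\<lambda>_. borel :: real measure))"
  have B: "B \<in> sets (PiM {1..1::nat} (\<lambda>_. borel :: real measure))" unfolding B_def by simp
  have YB: "{\<omega> \<in> space M. (\<lambda>i\<in>{1..1::nat}. X i \<omega>) \<in> B} = space M"
    unfolding B_def by (auto simp: space_PiM)
  have "measure M ({\<omega> \<in> space M. z < X (Suc 1) \<omega>} \<inter> {\<omega> \<in> space M. (\<lambda>i\<in>{1..1}. X i \<omega>) \<in> B})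
        = integral\<^sup>L M (\<lambda>\<omega>. indicator {\<omega> \<in> space M. (\<lambda>i\<in>{1..1}. X i \<omega>) \<in> B} \<omega>
                            * cond_surv (surv M (X 1)) (virt_age A X 1 \<omega>) z)"
    using Xcond z B by blast
  also have "\<dots> = (\<integral>\<omega>. cond_surv gU (X 1 \<omega>) z \<partial>M)"
    unfolding YB survX1 va1 by (intro Bochner_Integration.integral_cong) auto
  finally show ?thesis unfolding YB by (simp add: Int_absorb2 numeral_2_eq_2 del: One_nat_def)
qed

lemma cs_bound: assumes "0 \<le> x" "0 \<le> z"
  shows "cond_surv gU x z \<le> (1 - z) * indicator {..<1-z} x"
proof (cases "x < 1")
  case True
  then have g: "gU x = 1 - x" using assms by (simp add: gU_def)
  show ?thesis
  proof (cases "x < 1 - z")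
    case True
    then have "gU (x+z) = 1 - x - z" using assms by (simp add: gU_def)
    moreover have "(1 - x - z) / (1 - x) \<le> 1 - z"
    proof -
      have "1 - x - z \<le> (1 - z) * (1 - x)" using assms by (simp add: algebra_simps)
      then show ?thesis using \<open>x<1\<close> by (simp add: pos_divide_le_eq)
    qed
    ultimately show ?thesis using g True \<open>x<1\<close> by (simp add: cond_surv_def)
  next
    case False
    then have "gU (x+z) = 0" using assms by (simp add: gU_def)
    then show ?thesis using g False \<open>x<1\<close> by (simp add: cond_surv_def)
  qed
next
  case False
  then have "gU x = 0" by (simp add: gU_def)
  then show ?thesis using False assms by (simp add: cond_surv_def indicator_def)
qed

lemma cs_range: "0 \<le> cond_surv gU x z" "z \<ge> 0 \<Longrightarrow> cond_surv gU x z \<le> 1"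
  by (auto simp: cond_surv_def gU_def divide_le_eq min_def max_def)

lemma cs_meas[measurable]: "(\<lambda>\<omega>. cond_surv gU (f \<omega>) z) \<in> borel_measurable M" if [measurable]: "f \<in> borel_measurable M"
  unfolding cond_surv_def gU_def by measurable

lemma X2tail: assumes z: "0 \<le> z"
  shows "measure M {\<omega> \<in> space M. z < X 2 \<omega>} \<le> (if z \<le> 1 then (1-z)^2 else 0)"
proof -
  have int1: "integrable M (\<lambda>\<omega>. cond_surv gU (X 1 \<omega>) z)"
    by (rule integrable_const_bound[where B=1]) (use z cs_range in auto)
  have int2: "integrable M (\<lambda>\<omega>. (1 - z) * indicator {\<omega>\<in>space M. X 1 \<omega> < 1 - z} \<omega>)"
    by (intro integrable_mult_right integrable_indicator) (simp_all add: emeasure_eq_measure)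
  have "measure M {\<omega> \<in> space M. z < X 2 \<omega>} = (\<integral>\<omega>. cond_surv gU (X 1 \<omega>) z \<partial>M)"
    by (rule Xcond1[OF z])
  also have "\<dots> \<le> (\<integral>\<omega>. (1 - z) * indicator {\<omega>\<in>space M. X 1 \<omega> < 1 - z} \<omega> \<partial>M)"
    using int1 int2 cs_bound[OF Xnonneg z] by (intro integral_mono) (auto simp: indicator_def)
  also have "\<dots> = (1 - z) * measure M {\<omega>\<in>space M. X 1 \<omega> < 1 - z}"
    by simp
  also have "\<dots> \<le> (if z \<le> 1 then (1-z)^2 else 0)"
  proof (cases "z \<le> 1")
    case True
    have "measure M {\<omega>\<in>space M. X 1 \<omega> < 1 - z} \<le> measure M {\<omega>\<in>space M. X 1 \<omega> \<le> 1 - z}"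
      by (intro finite_measure_mono) auto
    also have "\<dots> = 1 - gU (1 - z)"
      using emeasure_unif_le[OF Xmeas X1unif, of "1-z"] gU_range[of "1-z"]
      by (simp add: emeasure_eq_measure)
    also have "\<dots> = 1 - z" using True z by (simp add: gU_def)
    finally show ?thesis using True by (simp add: power2_eq_square mult_left_mono)
  next
    case False
    then have "{\<omega>\<in>space M. X 1 \<omega> < 1 - z} = {}" using Xnonneg[of 1] by (smt (verit) Collect_empty_eq)
    then show ?thesis using False by (simp only:) simp
  qed
  finally show ?thesis .
qed

lemma layer: fixes W :: "'a \<Rightarrow> real"
  assumes [measurable]: "W \<in> borel_measurable M" and nn: "\<And>\<omega>. 0 \<le> W \<omega>"
  shows "(\<integral>\<^sup>+\<omega>. ennreal (W \<omega>) \<partial>M) = (\<integral>\<^sup>+z. indicator {0..} z * emeasure M {\<omega>\<in>space M. z < W \<omega>} \<partial>lborel)"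
proof -
  interpret P: pair_sigma_finite M lborel
    by (simp add: pair_sigma_finite_def sigma_finite_measure_axioms lborel.sigma_finite_measure_axioms)
  have "(\<integral>\<^sup>+\<omega>. ennreal (W \<omega>) \<partial>M) = (\<integral>\<^sup>+\<omega>. (\<integral>\<^sup>+z. (if 0 \<le> z \<and> z < W \<omega> then 1 else 0) \<partial>lborel) \<partial>M)"
  proof (intro nn_integral_cong)
    fix \<omega>
    have "(\<integral>\<^sup>+z. (if 0 \<le> z \<and> z < W \<omega> then 1 else 0) \<partial>lborel) = (\<integral>\<^sup>+z. indicator {0..<W \<omega>} z \<partial>lborel)"
      by (intro nn_integral_cong) (auto simp: indicator_def)
    also have "\<dots> = ennreal (W \<omega>)" using nn[of \<omega>] by simp
    finally show "ennreal (W \<omega>) = (\<integral>\<^sup>+z. (if 0 \<le> z \<and> z < W \<omega> then 1 else 0) \<partial>lborel)" by simp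
  qed
  also have "\<dots> = (\<integral>\<^sup>+z. (\<integral>\<^sup>+\<omega>. (if 0 \<le> z \<and> z < W \<omega> then 1 else 0) \<partial>M) \<partial>lborel)"
    by (rule P.Fubini'[symmetric]) measurable
  also have "\<dots> = (\<integral>\<^sup>+z. indicator {0..} z * emeasure M {\<omega>\<in>space M. z < W \<omega>} \<partial>lborel)"
  proof (intro nn_integral_cong)
    fix z :: real
    have "(\<integral>\<^sup>+\<omega>. (if 0 \<le> z \<and> z < W \<omega> then 1 else 0) \<partial>M) = (\<integral>\<^sup>+\<omega>. indicator {0..} z * indicator {\<omega>\<in>space M. z < W \<omega>} \<omega> \<partial>M)"
      by (intro nn_integral_cong) (auto simp: indicator_def)
    also have "\<dots> = indicator {0..} z * emeasure M {\<omega>\<in>space M. z < W \<omega>}"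
      by (subst nn_integral_cmult) auto
    finally show "(\<integral>\<^sup>+\<omega>. (if 0 \<le> z \<and> z < W \<omega> then 1 else 0) \<partial>M) = indicator {0..} z * emeasure M {\<omega>\<in>space M. z < W \<omega>}" .
  qed
  finally show ?thesis .
qed

lemma sqaux: "z*2 \<le> 1 + z*(z::real)"
proof -
  have "0 \<le> (z-1)^2" by simp
  then show ?thesis by (simp add: power2_eq_square algebra_simps)
qed

lemma X2mean: "(\<integral>\<^sup>+\<omega>. ennreal (X 2 \<omega>) \<partial>M) \<le> ennreal (1/3)"
proof -
  have "(\<integral>\<^sup>+\<omega>. ennreal (X 2 \<omega>) \<partial>M) = (\<integral>\<^sup>+z. indicator {0..} z * emeasure M {\<omega>\<in>space M. z < X 2 \<omega>} \<partial>lborel)"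
    by (rule layer) (auto simp: Xnonneg)
  also have "\<dots> \<le> (\<integral>\<^sup>+z. ennreal ((1 - z)^2) * indicator {0..1} z \<partial>lborel)"
  proof (intro nn_integral_mono)
    fix z :: real
    show "indicator {0..} z * emeasure M {\<omega>\<in>space M. z < X 2 \<omega>} \<le> ennreal ((1 - z)^2) * indicator {0..1} z"
    proof (cases "0 \<le> z")
      case True
      have "prob {\<omega> \<in> space M. z < X 2 \<omega>} \<le> (1 - z)^2 * indicator {0..1} z"
        using X2tail[OF True] measure_nonneg[of M "{\<omega> \<in> space M. z < X 2 \<omega>}"] True
        by (auto simp: indicator_def split: if_splits)
      then show ?thesis using True by (auto simp: emeasure_eq_measure indicator_def ennreal_leI split: if_splits)
          (metis measure_nonneg order_antisym)
    qed simp
  qed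
  also have "\<dots> = ennreal ((\<lambda>z::real. - ((1 - z)^3) / 3) 1 - (\<lambda>z::real. - ((1 - z)^3) / 3) 0)"
    by (rule nn_integral_FTC_Icc[where F="\<lambda>z. - ((1 - z)^3) / 3"]) (auto intro!: derivative_eq_intros simp: power2_eq_square power3_eq_cube field_simps sqaux)
  finally show ?thesis by simp
qed

lemma X3rect:
  assumes B: "B \<in> sets (PiM {1..2::nat} (\<lambda>_. borel :: real measure))"
  shows "emeasure M ({\<omega>\<in>space M. X 3 \<omega> \<le> z} \<inter> {\<omega>\<in>space M. (\<lambda>i\<in>{1..2}. X i \<omega>) \<in> B})
     = ennreal (1 - gU z) * emeasure M {\<omega>\<in>space M. (\<lambda>i\<in>{1..2}. X i \<omega>) \<in> B}"
proof (cases "0 \<le> z")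
  case False
  then have "{\<omega>\<in>space M. X 3 \<omega> \<le> z} = {}" using Xnonneg[of 3] by (smt (verit) Collect_empty_eq)
  moreover have "gU z = 1" using False by (simp add: gU_def)
  ultimately show ?thesis by (simp only: Int_empty_left emeasure_empty) simp
next
  case True
  define YB where "YB = {\<omega>\<in>space M. (\<lambda>i\<in>{1..2::nat}. X i \<omega>) \<in> B}"
  have YBm[measurable]: "YB \<in> sets M" unfolding YB_def using B by measurable
  have "measure M ({\<omega> \<in> space M. z < X (Suc 2) \<omega>} \<inter> YB)
        = integral\<^sup>L M (\<lambda>\<omega>. indicator YB \<omega> * cond_surv (surv M (X 1)) (virt_age A X 2 \<omega>) z)"
    using Xcond[rule_format, OF _ True B] unfolding YB_def by simp
  also have "\<dots> = (\<integral>\<omega>. gU z * indicator YB \<omega> \<partial>M)"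
    unfolding survX1 va2 by (intro Bochner_Integration.integral_cong) (auto simp: cond_surv_def gU_def)
  also have "\<dots> = gU z * measure M YB" by simp
  finally have e3: "measure M ({\<omega> \<in> space M. z < X 3 \<omega>} \<inter> YB) = gU z * measure M YB"
    by (simp add: numeral_3_eq_3)
  have "{\<omega>\<in>space M. X 3 \<omega> \<le> z} \<inter> YB = YB - ({\<omega> \<in> space M. z < X 3 \<omega>} \<inter> YB)"
    using sets.sets_into_space[OF YBm] by auto
  then have "measure M ({\<omega>\<in>space M. X 3 \<omega> \<le> z} \<inter> YB) = measure M YB - measure M ({\<omega> \<in> space M. z < X 3 \<omega>} \<inter> YB)"
    by (simp add: finite_measure_Diff)
  also have "\<dots> = (1 - gU z) * measure M YB" using e3 by (simp add: algebra_simps)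
  finally have fin: "measure M ({\<omega>\<in>space M. X 3 \<omega> \<le> z} \<inter> YB) = (1 - gU z) * measure M YB" .
  have "emeasure M ({\<omega>\<in>space M. X 3 \<omega> \<le> z} \<inter> YB) = ennreal ((1 - gU z) * measure M YB)"
    by (simp only: emeasure_eq_measure fin)
  also have "\<dots> = ennreal (1 - gU z) * ennreal (measure M YB)"
    using gU_range[of z] by (intro ennreal_mult) auto
  also have "\<dots> = ennreal (1 - gU z) * emeasure M YB" by (simp only: emeasure_eq_measure)
  finally show ?thesis unfolding YB_def .
qed

lemma X3fun:
  fixes \<phi> :: "(nat \<Rightarrow> real) \<Rightarrow> ennreal"
  assumes \<phi>[measurable]: "\<phi> \<in> borel_measurable (PiM {1..2::nat} (\<lambda>_. borel))"
  shows "(\<integral>\<^sup>+\<omega>. \<phi> (\<lambda>i\<in>{1..2}. X i \<omega>) * indicator {\<omega>\<in>space M. X 3 \<omega> \<le> z} \<omega> \<partial>M)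
      = ennreal (1 - gU z) * (\<integral>\<^sup>+\<omega>. \<phi> (\<lambda>i\<in>{1..2}. X i \<omega>) \<partial>M)"
proof -
  define PM2 where "PM2 = PiM {1..2::nat} (\<lambda>_. borel :: real measure)"
  define Y where "Y = (\<lambda>\<omega>. \<lambda>i\<in>{1..2::nat}. X i \<omega>)"
  define E where "E = {\<omega>\<in>space M. X 3 \<omega> \<le> z}"
  define c where "c = ennreal (1 - gU z)"
  have Ym[measurable]: "Y \<in> measurable M PM2" unfolding Y_def PM2_def by measurable
  have Em[measurable]: "E \<in> sets M" unfolding E_def by measurable
  have \<phi>m[measurable]: "\<phi> \<in> borel_measurable PM2" unfolding PM2_def by (rule \<phi>)
  have Ymd: "Y \<in> measurable (density M (indicator E)) PM2"
    by (simp add: measurable_cong_sets[OF sets_density refl] Ym)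
  have eqm: "distr (density M (indicator E)) PM2 Y = density (distr M PM2 Y) (\<lambda>_. c)"
  proof (rule measure_eqI)
    show "sets (distr (density M (indicator E)) PM2 Y) = sets (density (distr M PM2 Y) (\<lambda>_. c))" by simp
    fix B assume "B \<in> sets (distr (density M (indicator E)) PM2 Y)"
    then have B[measurable]: "B \<in> sets PM2" by simp
    have YB: "Y -` B \<inter> space M = {\<omega>\<in>space M. (\<lambda>i\<in>{1..2}. X i \<omega>) \<in> B}" unfolding Y_def by auto
    have YBm[measurable]: "Y -` B \<inter> space M \<in> sets M" using Ym B by (rule measurable_sets)
    have "emeasure (distr (density M (indicator E)) PM2 Y) B = emeasure (density M (indicator E)) (Y -` B \<inter> space M)"
      using emeasure_distr[OF Ymd B] by simp
    also have "\<dots> = (\<integral>\<^sup>+\<omega>. indicator E \<omega> * indicator (Y -` B \<inter> space M) \<omega> \<partial>M)"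
      by (rule emeasure_density) auto
    also have "\<dots> = emeasure M (E \<inter> (Y -` B \<inter> space M))"
    proof -
      have s: "E \<inter> (Y -` B \<inter> space M) \<in> sets M" by auto
      show ?thesis
        by (simp only: indicator_inter_arith[symmetric] nn_integral_indicator[OF s])
    qed
    also have "\<dots> = c * emeasure M (Y -` B \<inter> space M)"
      unfolding E_def YB c_def using X3rect[of B z] B unfolding PM2_def by simp
    also have "\<dots> = emeasure (density (distr M PM2 Y) (\<lambda>_. c)) B"
      by (simp add: emeasure_density nn_integral_cmult_indicator emeasure_distr)
    finally show "emeasure (distr (density M (indicator E)) PM2 Y) B = emeasure (density (distr M PM2 Y) (\<lambda>_. c)) B" .
  qed
  have "(\<integral>\<^sup>+\<omega>. \<phi> (Y \<omega>) * indicator E \<omega> \<partial>M) = (\<integral>\<^sup>+\<omega>. \<phi> (Y \<omega>) \<partial>density M (indicator E))"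
    by (subst nn_integral_density) (auto simp: mult.commute)
  also have "\<dots> = (\<integral>\<^sup>+x. \<phi> x \<partial>distr (density M (indicator E)) PM2 Y)"
    by (rule nn_integral_distr[symmetric, OF Ymd]) simp
  also have "\<dots> = (\<integral>\<^sup>+x. c * \<phi> x \<partial>distr M PM2 Y)"
    unfolding eqm by (subst nn_integral_density) auto
  also have "\<dots> = c * (\<integral>\<^sup>+x. \<phi> x \<partial>distr M PM2 Y)"
    by (rule nn_integral_cmult) simp
  also have "\<dots> = c * (\<integral>\<^sup>+\<omega>. \<phi> (Y \<omega>) \<partial>M)"
    by (subst nn_integral_distr) auto
  finally show ?thesis unfolding Y_def E_def c_def .
qed

lemma P1_tonelli: "(\<integral>\<^sup>+\<omega>. ennreal (exp (- X 1 \<omega>)) \<partial>M) = (\<integral>\<^sup>+z. ennreal (exp (-z)) * ennreal (1 - gU z) \<partial>lborel)"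
proof -
  have "(\<integral>\<^sup>+\<omega>. ennreal (exp (- X 1 \<omega>)) \<partial>M) = (\<integral>\<^sup>+\<omega>. 1 * ennreal (exp (- X 1 \<omega>)) \<partial>M)" by simp
  also have "\<dots> = (\<integral>\<^sup>+z. ennreal (exp (-z)) * (\<integral>\<^sup>+\<omega>. 1 * indicator {\<omega>\<in>space M. X 1 \<omega> \<le> z} \<omega> \<partial>M) \<partial>lborel)"
    by (rule tonelli_exp) auto
  also have "\<dots> = (\<integral>\<^sup>+z. ennreal (exp (-z)) * ennreal (1 - gU z) \<partial>lborel)"
  proof (intro nn_integral_cong)
    fix z :: real
    have s: "{\<omega>\<in>space M. X 1 \<omega> \<le> z} \<in> sets M" by measurable
    show "ennreal (exp (-z)) * (\<integral>\<^sup>+\<omega>. 1 * indicator {\<omega>\<in>space M. X 1 \<omega> \<le> z} \<omega> \<partial>M) = ennreal (exp (-z)) * ennreal (1 - gU z)"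
      using emeasure_unif_le[OF Xmeas X1unif, of z] by (simp only: mult_1 nn_integral_indicator[OF s])
  qed
  finally show ?thesis .
qed

lemma P3_eq: "(\<integral>\<^sup>+\<omega>. ennreal (exp (- (X 1 \<omega> + X 2 \<omega> + X 3 \<omega>))) \<partial>M)
   = (\<integral>\<^sup>+\<omega>. ennreal (exp (- X 1 \<omega>)) \<partial>M) * (\<integral>\<^sup>+\<omega>. ennreal (exp (- (X 1 \<omega> + X 2 \<omega>))) \<partial>M)"
proof -
  define \<phi> where "\<phi> = (\<lambda>y::nat\<Rightarrow>real. ennreal (exp (- (y 1 + y 2))))"
  have \<phi>m[measurable]: "\<phi> \<in> borel_measurable (PiM {1..2::nat} (\<lambda>_. borel))" unfolding \<phi>_def by measurable
  have \<phi>Y: "\<phi> (\<lambda>i\<in>{1..2}. X i \<omega>) = ennreal (exp (- (X 1 \<omega> + X 2 \<omega>)))" for \<omega>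
    by (simp add: \<phi>_def)
  define P2 where "P2 = (\<integral>\<^sup>+\<omega>. ennreal (exp (- (X 1 \<omega> + X 2 \<omega>))) \<partial>M)"
  have hm: "(\<lambda>\<omega>. \<phi> (\<lambda>i\<in>{1..2}. X i \<omega>)) \<in> borel_measurable M" by measurable
  have "(\<integral>\<^sup>+\<omega>. ennreal (exp (- (X 1 \<omega> + X 2 \<omega> + X 3 \<omega>))) \<partial>M)
      = (\<integral>\<^sup>+\<omega>. \<phi> (\<lambda>i\<in>{1..2}. X i \<omega>) * ennreal (exp (- X 3 \<omega>)) \<partial>M)"
  proof (intro nn_integral_cong)
    fix \<omega>
    show "ennreal (exp (- (X 1 \<omega> + X 2 \<omega> + X 3 \<omega>))) = \<phi> (\<lambda>i\<in>{1..2}. X i \<omega>) * ennreal (exp (- X 3 \<omega>))"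
      unfolding \<phi>Y by (subst ennreal_mult'[symmetric]) (auto simp: exp_add[symmetric])
  qed
  also have "\<dots> = (\<integral>\<^sup>+z. ennreal (exp (-z)) * (\<integral>\<^sup>+\<omega>. \<phi> (\<lambda>i\<in>{1..2}. X i \<omega>) * indicator {\<omega>\<in>space M. X 3 \<omega> \<le> z} \<omega> \<partial>M) \<partial>lborel)"
    by (rule tonelli_exp[OF _ hm]) simp
  also have "\<dots> = (\<integral>\<^sup>+z. ennreal (exp (-z)) * ennreal (1 - gU z) * P2 \<partial>lborel)"
  proof (intro nn_integral_cong)
    fix z :: real
    show "ennreal (exp (-z)) * (\<integral>\<^sup>+\<omega>. \<phi> (\<lambda>i\<in>{1..2}. X i \<omega>) * indicator {\<omega>\<in>space M. X 3 \<omega> \<le> z} \<omega> \<partial>M) = ennreal (exp (-z)) * ennreal (1 - gU z) * P2"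
      unfolding X3fun[OF \<phi>m] unfolding \<phi>Y P2_def by (simp only: mult.assoc)
  qed
  also have "\<dots> = (\<integral>\<^sup>+z. ennreal (exp (-z)) * ennreal (1 - gU z) \<partial>lborel) * P2"
    by (rule nn_integral_multc) measurable
  finally show ?thesis unfolding P1_tonelli P2_def .
qed

lemma P2_ge: "ennreal (2 * exp (-1)) \<le> (\<integral>\<^sup>+\<omega>. ennreal (exp (- (X 1 \<omega> + X 2 \<omega>))) \<partial>M) + ennreal (exp (-1)) * ennreal (1/2) + ennreal (exp (-1)) * ennreal (1/3)"
proof -
  have pw: "ennreal (2 * exp (-1)) \<le> ennreal (exp (- (X 1 \<omega> + X 2 \<omega>))) + ennreal (exp (-1)) * ennreal (X 1 \<omega>) + ennreal (exp (-1)) * ennreal (X 2 \<omega>)" for \<omega>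
  proof -
    have "exp (- (X 1 \<omega> + X 2 \<omega>)) = exp (-1) * exp (1 - (X 1 \<omega> + X 2 \<omega>))" by (simp add: exp_add[symmetric])
    also have "\<dots> \<ge> exp (-1) * (2 - (X 1 \<omega> + X 2 \<omega>))"
      using exp_ge_add_one_self[of "1 - (X 1 \<omega> + X 2 \<omega>)"] by (intro mult_left_mono) auto
    finally have "2 * exp (-1) \<le> exp (- (X 1 \<omega> + X 2 \<omega>)) + exp (-1) * X 1 \<omega> + exp (-1) * X 2 \<omega>"
      by (simp add: algebra_simps)
    then show ?thesis using Xnonneg[of 1 \<omega>] Xnonneg[of 2 \<omega>]
      by (simp add: ennreal_mult'[symmetric] ennreal_plus[symmetric] del: ennreal_plus)
  qed
  have "ennreal (2 * exp (-1)) = (\<integral>\<^sup>+\<omega>. ennreal (2 * exp (-1)) \<partial>M)" by (simp add: emeasure_space_1)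
  also have "\<dots> \<le> (\<integral>\<^sup>+\<omega>. ennreal (exp (- (X 1 \<omega> + X 2 \<omega>))) + ennreal (exp (-1)) * ennreal (X 1 \<omega>) + ennreal (exp (-1)) * ennreal (X 2 \<omega>) \<partial>M)"
    by (intro nn_integral_mono pw)
  also have "\<dots> = (\<integral>\<^sup>+\<omega>. ennreal (exp (- (X 1 \<omega> + X 2 \<omega>))) \<partial>M) + ennreal (exp (-1)) * (\<integral>\<^sup>+\<omega>. ennreal (X 1 \<omega>) \<partial>M) + ennreal (exp (-1)) * (\<integral>\<^sup>+\<omega>. ennreal (X 2 \<omega>) \<partial>M)"
    by (simp add: nn_integral_add nn_integral_cmult)
  also have "\<dots> \<le> (\<integral>\<^sup>+\<omega>. ennreal (exp (- (X 1 \<omega> + X 2 \<omega>))) \<partial>M) + ennreal (exp (-1)) * ennreal (1/2) + ennreal (exp (-1)) * ennreal (1/3)"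
    using unif_mean[OF Xmeas X1unif] X2mean by (intro add_mono mult_left_mono order_refl) auto
  finally show ?thesis .
qed

end

lemma sum3: "(\<Sum>i\<in>{1..3::nat}. f i) = f 1 + f 2 + (f 3 :: real)"
  by (simp add: numeral_3_eq_3 numeral_2_eq_2)
lemma sum2: "(\<Sum>i\<in>{1..2::nat}. f i) = f 1 + (f 2 :: real)"
  by (simp add: numeral_2_eq_2)

lemma e_ineq: "(1 - exp (-1::real))^2 < 7 / 6 * exp (-1)"
proof -
  define e where "e = exp (1::real)"
  have e2: "2 \<le> e" unfolding e_def using exp_ge_add_one_self[of 1] by simp
  have e3: "e < 272/100" unfolding e_def by (rule e_less_272)
  have em: "exp (-1::real) = 1 / e" unfolding e_def by (simp add: exp_minus field_simps)
  have "0 \<le> (e - 2) * (272/100 - e)" using e2 e3 by simp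
  moreover have "(e - 2) * (272/100 - e) = e * (472/100) - 544/100 - e*e" by (simp add: field_simps)
  ultimately have q0: "0 \<le> e * (472/100) - 544/100 - e*e" by linarith
  have "(e - 1)^2 = e*e - 2*e + 1" by (simp add: power2_eq_square algebra_simps)
  then have q: "(e - 1)^2 < 7/6 * e" using q0 e2 e3 by linarith
  have "(1 - exp (-1::real))^2 = (e - 1)^2 / e^2" unfolding em using e2
    by (simp add: field_simps power2_eq_square)
  also have "\<dots> < (7/6 * e) / e^2" using q e2 by (intro divide_strict_right_mono) auto
  also have "\<dots> = 7 / 6 * exp (-1)" unfolding em using e2 by (simp add: power2_eq_square field_simps)
  finally show ?thesis .
qed

theorem mainTheorem6:
  fixes M :: "'a measure" and X :: "nat \<Rightarrow> 'a \<Rightarrow> real" and T :: "'a \<Rightarrow> real"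
    and A :: "nat \<Rightarrow> real"
  assumes "prob_space M"
    and A1: "A 1 = 1" and A2: "A 2 = 0" and Anonneg: "\<forall>k. 0 \<le> A k"
    and Xmeas: "\<forall>k. X k \<in> borel_measurable M"
    and Xnonneg: "\<forall>k \<omega>. 0 \<le> X k \<omega>"
    and X1unif: "distr M lborel (X 1) = uniform_measure lborel {0<..<1}"
    and Xcond: "\<forall>k\<ge>1. \<forall>z\<ge>0. \<forall>B \<in> sets (PiM {1..k} (\<lambda>_. borel)).
        measure M ({\<omega> \<in> space M. z < X (Suc k) \<omega>} \<inter>
                   {\<omega> \<in> space M. (\<lambda>i\<in>{1..k}. X i \<omega>) \<in> B})
        = integral\<^sup>L M (\<lambda>\<omega>. indicator {\<omega> \<in> space M. (\<lambda>i\<in>{1..k}. X i \<omega>) \<in> B} \<omega>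
                            * cond_surv (surv M (X 1)) (virt_age A X k \<omega>) z)"
    and Texp: "distributed M lborel T (exponential_density 1)"
    and Tindep: "\<forall>B \<in> sets borel. \<forall>C \<in> sets (PiM UNIV (\<lambda>_::nat. borel)).
        measure M ({\<omega> \<in> space M. T \<omega> \<in> B} \<inter> {\<omega> \<in> space M. (\<lambda>k. X k \<omega>) \<in> C})
        = measure M {\<omega> \<in> space M. T \<omega> \<in> B} * measure M {\<omega> \<in> space M. (\<lambda>k. X k \<omega>) \<in> C}"
  shows "IFR (surv M (X 1)) \<and> DFR (surv M T)
    \<and> \<not> discrete_DFR M (\<lambda>\<omega>. count_proc X (T \<omega>) \<omega>)
    \<and> (measure M {\<omega> \<in> space M. enat 2 \<le> count_proc X (T \<omega>) \<omega>})\<^sup>2 >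
        measure M {\<omega> \<in> space M. enat 1 \<le> count_proc X (T \<omega>) \<omega>}
        * measure M {\<omega> \<in> space M. enat 3 \<le> count_proc X (T \<omega>) \<omega>}"
proof -
  interpret prob_space M by (rule assms(1))
  interpret K: kij M X A
    by unfold_locales (use A1 A2 Xmeas Xnonneg X1unif Xcond in auto)
  have Xm[measurable]: "\<And>k. X k \<in> borel_measurable M" using Xmeas by auto
  have Xnn: "\<And>k \<omega>. 0 \<le> X k \<omega>" using Xnonneg by auto
  have Tm[measurable]: "T \<in> borel_measurable M" using distributed_measurable[OF Texp] by simp
  have IFR: "IFR (surv M (X 1))" unfolding K.survX1 by (rule IFR_gU)
  have survT: "surv M T s = exp (- s)" if "0 \<le> s" for s
    using exponential_distributedD_gt[OF Texp that zero_less_one] unfolding surv_def by simp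
  have DFR: "DFR (surv M T)" unfolding DFR_def
  proof (intro allI impI)
    fix z s t :: real assume "0 \<le> z" "0 \<le> s" "s \<le> t"
    have c: "cond_surv (surv M T) x z = exp (- z)" if "0 \<le> x" for x
    proof -
      have "exp (- (x + z)) / exp (- x) = exp (- (x + z) - (- x))" by (rule exp_diff[symmetric])
      then show ?thesis using that \<open>0 \<le> z\<close> by (simp add: cond_surv_def survT)
    qed
    show "cond_surv (surv M T) s z \<le> cond_surv (surv M T) t z"
      using c[of s] c[of t] \<open>0 \<le> s\<close> \<open>s \<le> t\<close> by simp
  qed
  have ev: "{\<omega> \<in> space M. enat n \<le> count_proc X (T \<omega>) \<omega>} = {\<omega> \<in> space M. (\<Sum>i\<in>{1..n}. X i \<omega>) \<le> T \<omega>}"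
    if "1 \<le> n" for n
    using count_iff[where X=X and n=n, OF Xnn that] by auto
  have em: "emeasure M {\<omega> \<in> space M. (\<Sum>i\<in>{1..n}. X i \<omega>) \<le> T \<omega>} = (\<integral>\<^sup>+\<omega>. ennreal (exp (- (\<Sum>i\<in>{1..n}. X i \<omega>))) \<partial>M)" for n
  proof -
    have f: "(\<lambda>x::nat\<Rightarrow>real. \<Sum>i\<in>{1..n}. x i) \<in> borel_measurable (PiM UNIV (\<lambda>_::nat. borel))"
      by measurable
    show ?thesis
      using indepT[OF Xm Texp Tindep f] Xnn by (simp add: sum_nonneg)
  qed
  define p1 where "p1 = measure M {\<omega> \<in> space M. enat 1 \<le> count_proc X (T \<omega>) \<omega>}"
  define p2 where "p2 = measure M {\<omega> \<in> space M. enat 2 \<le> count_proc X (T \<omega>) \<omega>}"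
  define p3 where "p3 = measure M {\<omega> \<in> space M. enat 3 \<le> count_proc X (T \<omega>) \<omega>}"
  have P1: "ennreal p1 = (\<integral>\<^sup>+\<omega>. ennreal (exp (- X 1 \<omega>)) \<partial>M)"
    unfolding p1_def ev[OF order_refl] emeasure_eq_measure[symmetric] em by simp
  have P2: "ennreal p2 = (\<integral>\<^sup>+\<omega>. ennreal (exp (- (X 1 \<omega> + X 2 \<omega>))) \<partial>M)"
    unfolding p2_def ev[OF one_le_numeral] emeasure_eq_measure[symmetric] em unfolding sum2 ..
  have P3: "ennreal p3 = (\<integral>\<^sup>+\<omega>. ennreal (exp (- (X 1 \<omega> + X 2 \<omega> + X 3 \<omega>))) \<partial>M)"
    unfolding p3_def ev[OF one_le_numeral] emeasure_eq_measure[symmetric] em unfolding sum3 ..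
  have nn: "0 \<le> p1" "0 \<le> p2" "0 \<le> p3" unfolding p1_def p2_def p3_def by simp_all
  have e1: "0 \<le> 1 - exp (-1::real)" by simp
  have "ennreal p1 = ennreal (1 - exp (-1))"
    using P1 unif_exp[OF Xm X1unif] by simp
  then have p1v: "p1 = 1 - exp (-1)" using nn(1) e1 by (simp add: ennreal_inj)
  have "ennreal p3 = ennreal (p1 * p2)" unfolding P3 K.P3_eq P1[symmetric] P2[symmetric]
    using nn by (simp add: ennreal_mult)
  then have p3v: "p3 = p1 * p2" using nn by simp
  have ha: "0 \<le> exp (-1::real)" by simp
  have m1: "ennreal (exp (-1)) * ennreal (1/2) = ennreal (exp (-1) * (1/2))"
    by (rule ennreal_mult'[symmetric, OF ha])
  have m2: "ennreal (exp (-1)) * ennreal (1/3) = ennreal (exp (-1) * (1/3))"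
    by (rule ennreal_mult'[symmetric, OF ha])
  have a1: "ennreal p2 + ennreal (exp (-1) * (1/2)) = ennreal (p2 + exp (-1) * (1/2))"
    by (rule ennreal_plus[symmetric]) (use nn in auto)
  have a2: "ennreal (p2 + exp (-1) * (1/2)) + ennreal (exp (-1) * (1/3)) = ennreal (p2 + exp (-1) * (1/2) + exp (-1) * (1/3))"
    by (rule ennreal_plus[symmetric]) (use nn in auto)
  have "ennreal (2 * exp (-1)) \<le> ennreal (p2 + exp (-1) * (1/2) + exp (-1) * (1/3))"
    using K.P2_ge unfolding P2[symmetric] m1 m2 a1 a2 .
  then have "2 * exp (-1) \<le> p2 + exp (-1) * (1/2) + exp (-1) * (1/3)"
  proof -
    have rnn: "0 \<le> p2 + exp (-1) * (1/2) + exp (-1) * (1/3::real)" using nn by simp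
    show ?thesis using ennreal_le_iff[OF rnn] \<open>ennreal (2 * exp (-1)) \<le> _\<close> by blast
  qed
  then have p2lb: "7/6 * exp (-1) \<le> p2" by linarith
  have p2gt: "p1^2 < p2" using e_ineq p2lb unfolding p1v by linarith
  have "0 < exp (-1::real)" by simp
  then have p2pos: "0 < p2" using p2lb by linarith
  have main: "p2^2 > p1 * p3"
  proof -
    have "p1 * p3 = p1^2 * p2" by (simp add: p3v power2_eq_square)
    also have "\<dots> < p2 * p2" by (rule mult_strict_right_mono[OF p2gt p2pos])
    finally show ?thesis by (simp add: power2_eq_square)
  qed
  have notD: "\<not> discrete_DFR M (\<lambda>\<omega>. count_proc X (T \<omega>) \<omega>)"
  proof
    assume "discrete_DFR M (\<lambda>\<omega>. count_proc X (T \<omega>) \<omega>)"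
    have "(measure M {\<omega> \<in> space M. enat (1+1) \<le> count_proc X (T \<omega>) \<omega>})\<^sup>2 \<le>
       measure M {\<omega> \<in> space M. enat 1 \<le> count_proc X (T \<omega>) \<omega>} * measure M {\<omega> \<in> space M. enat (1+2) \<le> count_proc X (T \<omega>) \<omega>}"
      using spec[OF \<open>discrete_DFR M (\<lambda>\<omega>. count_proc X (T \<omega>) \<omega>)\<close>[unfolded discrete_DFR_def], of 1] .
    moreover have "(1::nat) + 1 = 2" "(1::nat) + 2 = 3" by simp_all
    ultimately have "p2^2 \<le> p1 * p3" unfolding p1_def p2_def p3_def by (simp only:)
    with main show False by simp
  qed
  show ?thesis using IFR DFR notD main unfolding p1_def p2_def p3_def by blast
qed

end
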